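(* For all integers $d,n$ with $d\geq 3$ and $n\geq\binom{d+2}{2}-1$ there are constants $c_4=c_4(n,d)>0$ and $c_5=c_5(n,d)>0$ with the following property. Let $A\subseteq\mathbb{R}^2$ be finite such that every subset $B\subseteq A$ with $|B|=n$ is contained in at most one curve of degree $d$. If $|A|>c_4$ and $A$ is not contained in any curve of degree $d$, then \[ \left|\mathcal{O}_{d,2n+1-\binom{d+2}{2}}(A)\right|\geq c_5|A|^{\binom{d+2}{2}-3}. \]
   Context: A curve of degree $d$ is a subset of $\mathbb{R}^2$ equal to the zero set of a polynomial in $\mathbb{R}[x,y]$ of degree exactly $d$; $\mathcal{C}_d$ denotes the family of curves of degree $d$. For $A\subseteq\mathbb{R}^2$, a curve $C_1\in\mathcal{C}_d$ is determined by $A$ if for every $C_2\in\mathcal{C}_d$ with $C_2\cap A\supseteq C_1\cap A$ we have $C_1=C_2$; $\mathcal{D}_d(A)$ is the family of curves of degree $d$ determined by $A$. For $n\in\mathbb{R}$, $\mathcal{O}_{d,n}(A):=\{C\in\mathcal{D}_d(A): |C\cap A|\le n\}$. *)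

theory Defs
  imports Complex_Main
begin

text \<open>Bivariate real polynomials are represented by coefficient functions
  c :: nat => nat => real, c i j being the coefficient of x^i y^j.\<close>

definition bipoly_eval :: "nat \<Rightarrow> (nat \<Rightarrow> nat \<Rightarrow> real) \<Rightarrow> real \<times> real \<Rightarrow> real" where
  "bipoly_eval d c p = (\<Sum>i\<le>d. \<Sum>j\<le>d. c i j * fst p ^ i * snd p ^ j)"

definition has_degree :: "nat \<Rightarrow> (nat \<Rightarrow> nat \<Rightarrow> real) \<Rightarrow> bool" where
  "has_degree d c \<longleftrightarrow> (\<forall>i j. d < i + j \<longrightarrow> c i j = 0) \<and> (\<exists>i j. i + j = d \<and> c i j \<noteq> 0)"

definition is_curve :: "nat \<Rightarrow> (real \<times> real) set \<Rightarrow> bool" where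
  "is_curve d C \<longleftrightarrow> (\<exists>c. has_degree d c \<and> C = {p. bipoly_eval d c p = 0})"

definition determined :: "nat \<Rightarrow> (real \<times> real) set \<Rightarrow> (real \<times> real) set \<Rightarrow> bool" where
  "determined d A C \<longleftrightarrow> is_curve d C \<and>
     (\<forall>C2. is_curve d C2 \<and> C2 \<inter> A \<supseteq> C \<inter> A \<longrightarrow> C = C2)"

definition ordinary_curves :: "nat \<Rightarrow> real \<Rightarrow> (real \<times> real) set \<Rightarrow> (real \<times> real) set set" where
  "ordinary_curves d n A = {C. determined d A C \<and> real (card (C \<inter> A)) \<le> n}"

end

theory Submission
  imports Defs "HOL-Library.Function_Algebras"
begin


instantiation "fun" :: (type, real_vector) real_vector
begin
definition scaleR_fun :: "real \<Rightarrow> ('a \<Rightarrow> 'b) \<Rightarrow> 'a \<Rightarrow> 'b" where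
  "scaleR_fun r f = (\<lambda>x. r *\<^sub>R f x)"
instance by standard (auto simp: scaleR_fun_def fun_eq_iff algebra_simps)
end

type_synonym bp = "nat \<Rightarrow> nat \<Rightarrow> real"

lemma scaleR_bp[simp]: "(r *\<^sub>R (c::bp)) i j = r * c i j"
  by (simp add: scaleR_fun_def)
lemma plus_bp[simp]: "((c::bp) + c') i j = c i j + c' i j"
  by (simp add: plus_fun_def)
lemma minus_bp[simp]: "((c::bp) - c') i j = c i j - c' i j"
  by (simp add: fun_diff_def)
lemma zero_bp[simp]: "(0::bp) i j = 0"
  by (simp add: zero_fun_def)
lemma sum_bp_apply: "(sum (F :: 'x \<Rightarrow> bp) S) a b = (\<Sum>x\<in>S. F x a b)"
  by (induct S rule: infinite_finite_induct) auto

lemma ev_add: "bipoly_eval d (c + c') p = bipoly_eval d c p + bipoly_eval d c' p"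
  by (simp add: bipoly_eval_def algebra_simps sum.distrib)
lemma ev_scale: "bipoly_eval d (r *\<^sub>R c) p = r * bipoly_eval d c p"
  by (simp add: bipoly_eval_def sum_distrib_left mult.assoc)
lemma ev_diff: "bipoly_eval d (c - c') p = bipoly_eval d c p - bipoly_eval d c' p"
  by (simp add: bipoly_eval_def algebra_simps sum_subtractf)
lemma ev_zero: "bipoly_eval d 0 p = 0"
  by (simp add: bipoly_eval_def)

definition Pd :: "nat \<Rightarrow> bp set" where "Pd d = {c. \<forall>i j. d < i + j \<longrightarrow> c i j = 0}"
definition Lo :: "nat \<Rightarrow> bp set" where "Lo d = {c. \<forall>i j. d \<le> i + j \<longrightarrow> c i j = 0}"
definition mon :: "nat \<Rightarrow> nat \<Rightarrow> bp" where "mon i j = (\<lambda>a b. if a = i \<and> b = j then 1 else 0)"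
definition Ix :: "nat \<Rightarrow> (nat \<times> nat) set" where "Ix d = {(i,j). i + j \<le> d}"

lemma Ix_Suc: "Ix (Suc d) = Ix d \<union> (\<lambda>i. (i, Suc d - i)) ` {..Suc d}"
  unfolding Ix_def by (auto simp: image_iff)

lemma finite_Ix: "finite (Ix d)"
  by (rule finite_subset[of _ "{..d} \<times> {..d}"]) (auto simp: Ix_def)

lemma card_Ix: "card (Ix d) = (d + 1) * (d + 2) div 2"
proof (induct d)
  case 0
  have "Ix 0 = {(0,0)}" by (auto simp: Ix_def)
  then show ?case by simp
next
  case (Suc d)
  have disj: "Ix d \<inter> (\<lambda>i. (i, Suc d - i)) ` {..Suc d} = {}" by (auto simp: Ix_def)
  have inj: "inj_on (\<lambda>i. (i, Suc d - i)) {..Suc d}" by (auto simp: inj_on_def)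
  have "card (Ix (Suc d)) = card (Ix d) + (d + 2)"
    unfolding Ix_Suc by (subst card_Un_disjoint) (auto simp: finite_Ix disj card_image[OF inj])
  then show ?case using Suc by simp
qed

lemma card_Ix_choose: "card (Ix d) = (d + 2) choose 2"
  unfolding card_Ix by (simp add: choose_two mult.commute)

lemma inj_mon: "inj_on (\<lambda>(i,j). mon i j) S"
  apply (clarsimp simp: inj_on_def mon_def fun_eq_iff)
  by (metis (full_types) zero_neq_one)

lemma mon_expand:
  assumes "\<forall>i j. (i, j) \<notin> S \<longrightarrow> c i j = 0" "finite S"
  shows "c = (\<Sum>(i,j)\<in>S. c i j *\<^sub>R mon i j)"
proof (rule ext, rule ext)
  fix a b
  have "(\<Sum>(i,j)\<in>S. c i j *\<^sub>R mon i j) a b = (\<Sum>x\<in>S. (if x = (a,b) then c a b else 0))"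
    unfolding sum_bp_apply by (rule sum.cong) (auto simp: mon_def split: if_splits)
  also have "\<dots> = c a b" using assms by (simp add: sum.delta)
  finally show "c a b = (\<Sum>(i,j)\<in>S. c i j *\<^sub>R mon i j) a b" by simp
qed

lemma in_span_mon:
  assumes "\<forall>i j. (i, j) \<notin> S \<longrightarrow> c i j = 0" "finite S"
  shows "c \<in> span ((\<lambda>(i,j). mon i j) ` S)"
  apply (subst mon_expand[OF assms])
  apply (rule span_sum)
  apply clarsimp
  apply (rule span_scale)
  apply (rule span_base)
  apply force
  done

lemma indep_mon: "independent ((\<lambda>(i,j). mon i j) ` (Ix d))"
proof
  assume "dependent ((\<lambda>(i,j). mon i j) ` (Ix d))"
  then obtain u v where u: "v \<in> (\<lambda>(i,j). mon i j) ` (Ix d)" "u v \<noteq> 0"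
     "(\<Sum>v\<in>(\<lambda>(i,j). mon i j) ` (Ix d). u v *\<^sub>R v) = 0"
    using dependent_finite[of "(\<lambda>(i,j). mon i j) ` (Ix d)"] finite_Ix by (meson finite_imageI)
  from u(1,2) obtain i j where ij: "(i,j) \<in> Ix d" "u (mon i j) \<noteq> 0" by auto
  have "0 = (\<Sum>v\<in>(\<lambda>(i,j). mon i j) ` (Ix d). u v *\<^sub>R v) i j" using u(3) by simp
  also have "\<dots> = (\<Sum>x\<in>Ix d. u (mon (fst x) (snd x)) * mon (fst x) (snd x) i j)"
    unfolding sum_bp_apply by (subst sum.reindex[OF inj_mon]) (auto simp: case_prod_beta)
  also have "\<dots> = (\<Sum>x\<in>Ix d. if x = (i,j) then u (mon i j) else 0)"
    by (rule sum.cong) (auto simp: mon_def)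
  also have "\<dots> = u (mon i j)" using ij by (simp add: sum.delta finite_Ix)
  finally show False using ij by simp
qed


section \<open>Finite dimensional linear algebra in an arbitrary real vector space\<close>

lemma card_le_dim':
  fixes V :: "'a::real_vector set"
  assumes "B \<subseteq> V" "independent B" "V \<subseteq> span W0" "finite W0"
  shows "card B \<le> dim V \<and> finite B"
proof -
  obtain B' where B': "B' \<subseteq> V" "independent B'" "V \<subseteq> span B'" "card B' = dim V"
    using basis_exists by blast
  have fB': "finite B'" using independent_span_bound[OF assms(4) B'(2)] B'(1) assms(3) by blast
  have "B \<subseteq> span B'" using assms(1) B'(3) by blast
  from independent_span_bound[OF fB' assms(2) this] B'(4) show ?thesis by simp
qed

lemma dim_subset':
  fixes S :: "'a::real_vector set"
  assumes "S \<subseteq> T" "T \<subseteq> span W0" "finite W0"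
  shows "dim S \<le> dim T"
proof -
  obtain B where B: "B \<subseteq> S" "independent B" "S \<subseteq> span B" "card B = dim S"
    using basis_exists by blast
  show ?thesis using card_le_dim'[of B T W0] B assms by auto
qed

lemma dim_pos:
  fixes V :: "'a::real_vector set"
  assumes "x \<in> V" "x \<noteq> 0" "V \<subseteq> span W0" "finite W0"
  shows "1 \<le> dim V"
  using card_le_dim'[of "{x}" V W0] assms by (auto simp: independent_insert)

lemma dim_drop:
  fixes W :: "'a::real_vector set" and \<phi> :: "'a \<Rightarrow> real"
  assumes sub: "subspace W" and fin: "W \<subseteq> span W0" "finite W0"
    and lin: "\<And>x y. \<phi> (x + y) = \<phi> x + \<phi> y" "\<And>r x. \<phi> (r *\<^sub>R x) = r * \<phi> x"
    and g: "g \<in> W" "\<phi> g \<noteq> 0"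
  shows "dim W = dim {x\<in>W. \<phi> x = 0} + 1"
proof -
  let ?W' = "{x\<in>W. \<phi> x = 0}"
  have sub': "subspace ?W'"
    unfolding subspace_def using sub lin
    by (auto simp: subspace_def) (metis add.right_neutral lin(2) mult_zero_left scaleR_zero_left)
  obtain B where B: "B \<subseteq> ?W'" "independent B" "?W' \<subseteq> span B" "card B = dim ?W'"
    using basis_exists by blast
  have fB: "finite B" using card_le_dim'[of B ?W' W0] B fin by auto
  have spB: "span B \<subseteq> ?W'" using B(1) sub' by (simp add: span_minimal)
  have gB: "g \<notin> span B" using spB g by auto
  have ind: "independent (insert g B)" using B(2) gB by (simp add: independent_insert)
  have "W \<subseteq> span (insert g B)"
  proof
    fix x assume x: "x \<in> W"
    let ?y = "x - (\<phi> x / \<phi> g) *\<^sub>R g"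
    have e0: "x = ?y + (\<phi> x / \<phi> g) *\<^sub>R g" by simp
    have e: "\<phi> x = \<phi> ?y + (\<phi> x / \<phi> g) * \<phi> g"
      by (subst e0) (simp only: lin)
    have "\<phi> ?y = 0" using e g(2) by simp
    moreover have "?y \<in> W" using x g sub by (simp add: subspace_diff subspace_scale)
    ultimately have "?y \<in> span B" using B(3) by auto
    then have "?y + (\<phi> x / \<phi> g) *\<^sub>R g \<in> span (insert g B)"
      by (meson span_add span_base span_mono span_scale insertI1 subset_insertI subsetD)
    then show "x \<in> span (insert g B)" by simp
  qed
  moreover have "insert g B \<subseteq> W" using B(1) g by auto
  ultimately have "span (insert g B) = span W"
    by (metis span_minimal span_mono span_span subset_antisym)
  then have "dim W = card (insert g B)" using dim_eq_card[OF _ ind] by simp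
  also have "\<dots> = card B + 1"
  proof -
    have "g \<notin> B" using gB span_base[of g B] by blast
    then show ?thesis using fB by simp
  qed
  finally show ?thesis using B(4) by simp
qed

lemma dim2_obtain:
  fixes V :: "'a::real_vector set"
  assumes "2 \<le> dim V"
  obtains f1 f2 where "f1 \<in> V" "f2 \<in> V" "f1 \<noteq> 0" "f2 \<notin> span {f1}"
proof -
  obtain B where B: "B \<subseteq> V" "independent B" "V \<subseteq> span B" "card B = dim V"
    using basis_exists by blast
  then have "2 \<le> card B" using assms by simp
  then have fin: "finite B" using card_ge_0_finite[of B] by linarith
  from \<open>2 \<le> card B\<close> obtain f1 where f1: "f1 \<in> B" by fastforce
  have "1 \<le> card (B - {f1})" using \<open>2 \<le> card B\<close> fin f1 by (simp add: card_Diff_singleton)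
  then obtain f2 where "f2 \<in> B - {f1}" by (metis card.empty ex_in_conv not_one_le_zero)
  then have f: "f1 \<in> B" "f2 \<in> B" "f1 \<noteq> f2" using f1 by auto
  have "f1 \<noteq> 0" using B(2) f(1) dependent_zero by blast
  moreover have "f2 \<notin> span (B - {f2})" using B(2) f(2) by (simp add: dependent_def)
  then have "f2 \<notin> span {f1}" using f span_mono[of "{f1}" "B - {f2}"] by blast
  ultimately show ?thesis using that f B(1) by blast
qed

lemma dim3_basis:
  fixes V :: "'a::real_vector set"
  assumes "dim V = 3"
  obtains f1 f2 f3 where "f1 \<in> V" "f2 \<in> V" "f3 \<in> V"
    "\<And>c. c \<in> V \<Longrightarrow> \<exists>a1 a2 a3. c = a1 *\<^sub>R f1 + a2 *\<^sub>R f2 + a3 *\<^sub>R f3"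
    "\<And>a1 a2 a3. a1 *\<^sub>R f1 + a2 *\<^sub>R f2 + a3 *\<^sub>R f3 = 0 \<Longrightarrow> a1 = 0 \<and> a2 = 0 \<and> a3 = 0"
proof -
  obtain B where B: "B \<subseteq> V" "independent B" "V \<subseteq> span B" "card B = dim V"
    using basis_exists by blast
  then obtain f1 f2 f3 where Bf: "B = {f1,f2,f3}" "f1 \<noteq> f2" "f2 \<noteq> f3" "f1 \<noteq> f3"
    using assms card_3_iff[of B] by auto
  have fB: "finite B" using Bf by simp
  have 1: "\<exists>a1 a2 a3. c = a1 *\<^sub>R f1 + a2 *\<^sub>R f2 + a3 *\<^sub>R f3" if "c \<in> V" for c
  proof -
    from that B(3) have "c \<in> span B" by auto
    then obtain u where "c = (\<Sum>v\<in>B. u v *\<^sub>R v)" using span_finite[OF fB] by auto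
    then have "c = u f1 *\<^sub>R f1 + u f2 *\<^sub>R f2 + u f3 *\<^sub>R f3" using Bf by (simp add: algebra_simps)
    then show ?thesis by blast
  qed
  have 2: "a1 = 0 \<and> a2 = 0 \<and> a3 = 0" if "a1 *\<^sub>R f1 + a2 *\<^sub>R f2 + a3 *\<^sub>R f3 = 0" for a1 a2 a3
  proof -
    define u where "u v = (if v = f1 then a1 else if v = f2 then a2 else a3)" for v
    have "(\<Sum>v\<in>B. u v *\<^sub>R v) = 0" using that Bf by (simp add: u_def algebra_simps)
    then have "\<forall>v\<in>B. u v = 0" using B(2) dependent_finite[OF fB] by blast
    then show ?thesis using Bf by (auto simp: u_def)
  qed
  show ?thesis using that[of f1 f2 f3] 1 2 B(1) Bf by auto
qed




lemma subspace_Pd: "subspace (Pd d)"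
  unfolding subspace_def Pd_def by auto
lemma subspace_Lo: "subspace (Lo d)"
  unfolding subspace_def Lo_def by auto
lemma Lo_Pd: "Lo d \<subseteq> Pd d"
  unfolding Lo_def Pd_def by auto

lemma Pd_span: "Pd d \<subseteq> span ((\<lambda>(i,j). mon i j) ` Ix d)"
proof
  fix c assume "c \<in> Pd d"
  then show "c \<in> span ((\<lambda>(i,j). mon i j) ` Ix d)"
    by (intro in_span_mon[OF _ finite_Ix]) (auto simp: Pd_def Ix_def not_le)
qed

lemma fin_W0: "finite ((\<lambda>(i,j). mon i j) ` Ix d)"
  by (simp add: finite_Ix)

lemma dim_Pd: "(d + 2) choose 2 \<le> dim (Pd d)"
proof -
  have "(\<lambda>(i,j). mon i j) ` Ix d \<subseteq> Pd d"
    by (auto simp: Pd_def Ix_def mon_def)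
  then have "card ((\<lambda>(i,j). mon i j) ` Ix d) \<le> dim (Pd d)"
    using card_le_dim'[OF _ indep_mon Pd_span fin_W0] by auto
  then show ?thesis using card_image[OF inj_mon] card_Ix_choose by simp
qed

lemma dim_Lo: assumes "1 \<le> d" shows "dim (Lo d) + (d + 1) \<le> (d + 2) choose 2"
proof -
  have "Lo d \<subseteq> span ((\<lambda>(i,j). mon i j) ` Ix (d - 1))"
  proof
    fix c assume "c \<in> Lo d"
    then show "c \<in> span ((\<lambda>(i,j). mon i j) ` Ix (d - 1))"
      using assms by (intro in_span_mon[OF _ finite_Ix]) (auto simp: Lo_def Ix_def not_le)
  qed
  then have "dim (Lo d) \<le> card ((\<lambda>(i,j). mon i j) ` Ix (d - 1))"
    by (rule dim_le_card) (simp add: finite_Ix)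
  also have "\<dots> \<le> card (Ix (d - 1))" by (rule card_image_le) (simp add: finite_Ix)
  finally have "dim (Lo d) \<le> d * (d + 1) div 2" using assms by (simp add: card_Ix)
  moreover have "(d + 2) choose 2 = (d + 1) * (d + 2) div 2"
    using card_Ix card_Ix_choose by metis
  moreover have "(d + 1) * (d + 2) = d * (d + 1) + 2 * (d + 1)" by (simp add: algebra_simps)
  ultimately show ?thesis by simp
qed

lemma has_degree_iff: "has_degree d c \<longleftrightarrow> c \<in> Pd d \<and> c \<notin> Lo d"
  unfolding has_degree_def Pd_def Lo_def
  by (auto simp: not_less) (metis le_antisym not_less)+

lemma curve_of: "c \<in> Pd d \<Longrightarrow> c \<notin> Lo d \<Longrightarrow> is_curve d {p. bipoly_eval d c p = 0}"
  unfolding is_curve_def has_degree_iff by blast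

lemma nonzero_poly:
  assumes "c \<in> Pd d" "c \<noteq> 0"
  shows "\<exists>p. bipoly_eval d c p \<noteq> 0"
proof (rule ccontr)
  assume "\<not> ?thesis"
  have eq: "bipoly_eval d c (x,y) = (\<Sum>i\<le>d. (\<Sum>j\<le>d. c i j * y ^ j) * x ^ i)" for x y
    unfolding bipoly_eval_def sum_distrib_right by (intro sum.cong refl) (simp add: algebra_simps)
  from \<open>\<not> ?thesis\<close> have all: "\<forall>x y. (\<Sum>i\<le>d. (\<Sum>j\<le>d. c i j * y ^ j) * x ^ i) = 0"
    by (auto simp: eq[symmetric])
  have "\<forall>i\<le>d. \<forall>y. (\<Sum>j\<le>d. c i j * y ^ j) = 0"
  proof (intro allI impI)
    fix i y assume "i \<le> d"
    from all have "\<forall>x. (\<Sum>i\<le>d. (\<Sum>j\<le>d. c i j * y ^ j) * x ^ i) = 0" by blast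
    then show "(\<Sum>j\<le>d. c i j * y ^ j) = 0"
      using polyfun_eq_0[of "\<lambda>i. \<Sum>j\<le>d. c i j * y ^ j" d] \<open>i \<le> d\<close> by simp
  qed
  then have z: "c i j = 0" if "i \<le> d" "j \<le> d" for i j
    using polyfun_eq_0[of "\<lambda>j. c i j" d] that by simp
  obtain i j where cij: "c i j \<noteq> 0" using assms(2) by (auto simp: fun_eq_iff)
  then have "\<not> d < i + j" using assms(1) unfolding Pd_def by blast
  then have "i \<le> d" "j \<le> d" by auto
  then show False using z cij by blast
qed


definition exdeg :: "nat \<Rightarrow> bp \<Rightarrow> bool" where
  "exdeg e h \<longleftrightarrow> (\<forall>i j. e < i + j \<longrightarrow> h i j = 0) \<and> (\<exists>i j. i + j = e \<and> h i j \<noteq> 0)"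

definition ml :: "real \<Rightarrow> bp \<Rightarrow> bp" where
  "ml a h = (\<lambda>i j. (if 1 \<le> i then h (i - 1) j else 0) - a * h i j)"

lemma exdeg_ml: assumes "exdeg e h" shows "exdeg (Suc e) (ml a h)"
proof -
  from assms obtain i0 j0 where ij: "i0 + j0 = e" "h i0 j0 \<noteq> 0" "\<forall>i j. e < i + j \<longrightarrow> h i j = 0"
    unfolding exdeg_def by blast
  have "ml a h (Suc i0) j0 = h i0 j0" using ij by (simp add: ml_def)
  moreover have "\<forall>i j. Suc e < i + j \<longrightarrow> ml a h i j = 0"
    using ij(3) by (auto simp: ml_def)
  ultimately show ?thesis unfolding exdeg_def using ij
    by (metis add_Suc)
qed

lemma ev_ml:
  assumes "\<forall>i j. e < i + j \<longrightarrow> h i j = 0" "e < d"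
  shows "bipoly_eval d (ml a h) p = (fst p - a) * bipoly_eval d h p"
proof -
  obtain d' where d': "d = Suc d'" using assms(2) by (cases d) auto
  define x where "x = fst p"
  define y where "y = snd p"
  have hd: "h (Suc d') j = 0" for j using assms d' by auto
  have S1: "(\<Sum>i\<le>d. \<Sum>j\<le>d. (if 1 \<le> i then h (i - 1) j else 0) * x ^ i * y ^ j)
      = x * (\<Sum>i\<le>d'. \<Sum>j\<le>d. h i j * x ^ i * y ^ j)"
    unfolding d' sum.atMost_Suc_shift
    by (simp add: sum_distrib_left algebra_simps)
  have S2: "(\<Sum>i\<le>d. \<Sum>j\<le>d. h i j * x ^ i * y ^ j) = (\<Sum>i\<le>d'. \<Sum>j\<le>d. h i j * x ^ i * y ^ j)"
    unfolding d' sum.atMost_Suc using hd by (simp add: d')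
  have "bipoly_eval d (ml a h) p = (\<Sum>i\<le>d. \<Sum>j\<le>d. (if 1 \<le> i then h (i - 1) j else 0) * x ^ i * y ^ j)
      - a * (\<Sum>i\<le>d. \<Sum>j\<le>d. h i j * x ^ i * y ^ j)"
    unfolding bipoly_eval_def ml_def x_def y_def
    by (simp add: algebra_simps sum_subtractf sum_distrib_left)
  also have "\<dots> = (x - a) * (\<Sum>i\<le>d. \<Sum>j\<le>d. h i j * x ^ i * y ^ j)"
    unfolding S1 S2 by (simp add: algebra_simps)
  finally show ?thesis unfolding bipoly_eval_def x_def y_def .
qed

lemma ml_iter:
  assumes "exdeg e g" "e + k \<le> d"
  shows "exdeg (e + k) ((ml a ^^ k) g) \<and>
    (\<forall>p. bipoly_eval d ((ml a ^^ k) g) p = (fst p - a) ^ k * bipoly_eval d g p)"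
  using assms(2)
proof (induct k)
  case 0
  then show ?case using assms(1) by simp
next
  case (Suc k)
  then have IH: "exdeg (e + k) ((ml a ^^ k) g)"
    "\<And>p. bipoly_eval d ((ml a ^^ k) g) p = (fst p - a) ^ k * bipoly_eval d g p" by auto
  have "exdeg (e + Suc k) ((ml a ^^ Suc k) g)" using exdeg_ml[OF IH(1)] by simp
  moreover have "bipoly_eval d ((ml a ^^ Suc k) g) p = (fst p - a) ^ Suc k * bipoly_eval d g p" for p
  proof -
    have "bipoly_eval d ((ml a ^^ Suc k) g) p = (fst p - a) * bipoly_eval d ((ml a ^^ k) g) p"
      using ev_ml[of "e + k" "(ml a ^^ k) g" d a p] IH(1) Suc.prems
      by (simp add: exdeg_def)
    then show ?thesis using IH(2) by simp
  qed
  ultimately show ?case by blast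
qed

lemma exdeg_exists:
  "\<And>g. g \<noteq> 0 \<Longrightarrow> (\<forall>i j. e < i + j \<longrightarrow> g i j = 0) \<Longrightarrow> \<exists>e'\<le>e. exdeg e' g"
proof (induct e)
  case 0
  have "g 0 0 \<noteq> 0"
  proof
    assume "g 0 0 = 0"
    with 0 have "\<forall>i j. g i j = 0" by (metis add_is_0 not_gr_zero)
    with 0 show False by (auto simp: fun_eq_iff)
  qed
  then show ?case using 0 unfolding exdeg_def by (intro exI[of _ 0]) auto
next
  case (Suc e)
  show ?case
  proof (cases "\<exists>i j. i + j = Suc e \<and> g i j \<noteq> 0")
    case True
    then show ?thesis using Suc.prems unfolding exdeg_def by blast
  next
    case False
    then have "\<forall>i j. e < i + j \<longrightarrow> g i j = 0" using Suc.prems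
      by (metis Suc_lessI)
    then show ?thesis using Suc.hyps Suc.prems(1) le_Suc_eq by blast
  qed
qed

lemma low_two_curves:
  assumes "g \<in> Lo d" "g \<noteq> 0" "1 \<le> d"
  shows "\<exists>C1 C2. is_curve d C1 \<and> is_curve d C2 \<and> C1 \<noteq> C2 \<and>
     {p. bipoly_eval d g p = 0} \<subseteq> C1 \<and> {p. bipoly_eval d g p = 0} \<subseteq> C2"
proof -
  have "\<forall>i j. d - 1 < i + j \<longrightarrow> g i j = 0" using assms(1,3) unfolding Lo_def by auto
  then obtain e where e: "e \<le> d - 1" "exdeg e g" using exdeg_exists assms(2) by blast
  define k where "k = d - e"
  have k: "1 \<le> k" "e + k = d" using e assms(3) by (auto simp: k_def)
  obtain q where q: "bipoly_eval d g q \<noteq> 0"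
    using nonzero_poly assms Lo_Pd by blast
  define a where "a = fst q"
  define h1 where "h1 = (ml a ^^ k) g"
  define h2 where "h2 = (ml (a + 1) ^^ k) g"
  have h1: "exdeg d h1" "\<And>p. bipoly_eval d h1 p = (fst p - a) ^ k * bipoly_eval d g p"
    using ml_iter[OF e(2), of k d a] k unfolding h1_def by auto
  have h2: "exdeg d h2" "\<And>p. bipoly_eval d h2 p = (fst p - (a + 1)) ^ k * bipoly_eval d g p"
    using ml_iter[OF e(2), of k d "a + 1"] k unfolding h2_def by auto
  have hd: "has_degree d h1" "has_degree d h2"
    using h1(1) h2(1) unfolding exdeg_def has_degree_def by auto
  let ?C1 = "{p. bipoly_eval d h1 p = 0}"
  let ?C2 = "{p. bipoly_eval d h2 p = 0}"
  have "q \<in> ?C1" using h1(2)[of q] k(1) by (simp add: a_def zero_power)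
  moreover have "q \<notin> ?C2" using h2(2)[of q] q by (simp add: a_def)
  moreover have "{p. bipoly_eval d g p = 0} \<subseteq> ?C1" "{p. bipoly_eval d g p = 0} \<subseteq> ?C2"
    using h1(2) h2(2) by auto
  moreover have "is_curve d ?C1" "is_curve d ?C2" using hd unfolding is_curve_def by auto
  ultimately show ?thesis by blast
qed


definition VS :: "nat \<Rightarrow> (real \<times> real) set \<Rightarrow> bp set" where
  "VS d S = {c \<in> Pd d. \<forall>p\<in>S. bipoly_eval d c p = 0}"
definition Zc :: "nat \<Rightarrow> bp set \<Rightarrow> (real \<times> real) set \<Rightarrow> (real \<times> real) set" where
  "Zc d W A = {p\<in>A. \<forall>c\<in>W. bipoly_eval d c p = 0}"
definition Hyp :: "nat \<Rightarrow> nat \<Rightarrow> (real \<times> real) set \<Rightarrow> bool" where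
  "Hyp d n A \<longleftrightarrow> (\<forall>B \<subseteq> A. card B = n \<longrightarrow>
          (\<forall>C1 C2. is_curve d C1 \<and> is_curve d C2 \<and> B \<subseteq> C1 \<and> B \<subseteq> C2 \<longrightarrow> C1 = C2))"

lemma subspace_VS: "subspace (VS d S)"
  unfolding subspace_def VS_def using subspace_Pd[of d]
  by (auto simp: subspace_def ev_add ev_scale ev_zero)

lemma VS_span: "VS d S \<subseteq> span ((\<lambda>(i,j). mon i j) ` Ix d)"
  using Pd_span by (auto simp: VS_def)

lemma VS_insert: "VS d (insert p S) = {c \<in> VS d S. bipoly_eval d c p = 0}"
  by (auto simp: VS_def)

lemma noLo:
  assumes "Hyp d n A" "B \<subseteq> A" "card B = n" "g \<in> Lo d" "g \<noteq> 0"
    "\<forall>p\<in>B. bipoly_eval d g p = 0" "1 \<le> d"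
  shows False
proof -
  obtain C1 C2 where "is_curve d C1" "is_curve d C2" "C1 \<noteq> C2"
     "{p. bipoly_eval d g p = 0} \<subseteq> C1" "{p. bipoly_eval d g p = 0} \<subseteq> C2"
    using low_two_curves[OF assms(4,5,7)] by blast
  moreover have "B \<subseteq> {p. bipoly_eval d g p = 0}" using assms(6) by auto
  ultimately show False using assms(1,2,3) unfolding Hyp_def by blast
qed

lemma P1:
  assumes "Hyp d n A" "B \<subseteq> A" "card B = n" "1 \<le> d"
  shows "dim (VS d B) \<le> 1"
proof (rule ccontr)
  assume "\<not> ?thesis"
  then obtain f1 f2 where f: "f1 \<in> VS d B" "f2 \<in> VS d B" "f1 \<noteq> 0" "f2 \<notin> span {f1}"
    using dim2_obtain[of "VS d B"] by (metis not_less_eq_eq numeral_2_eq_2 One_nat_def)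
  have f1Lo: "f1 \<notin> Lo d"
    using noLo[OF assms(1-3) _ f(3) _ assms(4), of ] f(1) unfolding VS_def by blast
  obtain q where q: "bipoly_eval d f1 q \<noteq> 0" using nonzero_poly f(1,3) unfolding VS_def by blast
  define h where "h = bipoly_eval d f2 q *\<^sub>R f1 - bipoly_eval d f1 q *\<^sub>R f2"
  have hV: "h \<in> VS d B" unfolding h_def using f(1,2) subspace_VS
    by (simp add: subspace_diff subspace_scale)
  have "h \<noteq> 0"
  proof
    assume "h = 0"
    then have e: "bipoly_eval d f2 q *\<^sub>R f1 = bipoly_eval d f1 q *\<^sub>R f2" unfolding h_def by simp
    have "f2 = inverse (bipoly_eval d f1 q) *\<^sub>R (bipoly_eval d f1 q *\<^sub>R f2)" using q by simp
    also have "\<dots> = (bipoly_eval d f2 q / bipoly_eval d f1 q) *\<^sub>R f1"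
      unfolding e[symmetric] by (simp add: divide_inverse mult.commute)
    finally have "f2 = (bipoly_eval d f2 q / bipoly_eval d f1 q) *\<^sub>R f1" .
    then have "f2 \<in> span {f1}" by (metis span_base span_scale singletonI)
    then show False using f(4) by blast
  qed
  then have hLo: "h \<notin> Lo d"
    using noLo[OF assms(1-3) _ _ _ assms(4)] hV unfolding VS_def by blast
  have hq: "bipoly_eval d h q = 0" unfolding h_def by (simp add: ev_diff ev_scale)
  let ?C1 = "{p. bipoly_eval d f1 p = 0}"
  let ?C2 = "{p. bipoly_eval d h p = 0}"
  have "is_curve d ?C1" using curve_of f1Lo f(1) unfolding VS_def by blast
  moreover have "is_curve d ?C2" using curve_of hLo hV unfolding VS_def by blast
  moreover have "B \<subseteq> ?C1" "B \<subseteq> ?C2" using f(1) hV unfolding VS_def by auto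
  moreover have "?C1 \<noteq> ?C2" using q hq by blast
  ultimately show False using assms(1,2,3) unfolding Hyp_def by blast
qed

lemma bound1:
  assumes "Hyp d n A" "finite A" "W \<subseteq> Pd d" "2 \<le> dim W" "1 \<le> d"
  shows "card (Zc d W A) < n"
proof (rule ccontr)
  assume "\<not> ?thesis"
  then obtain B where B: "B \<subseteq> Zc d W A" "card B = n"
    by (meson not_less obtain_subset_with_card_n)
  then have BA: "B \<subseteq> A" by (auto simp: Zc_def)
  have "W \<subseteq> VS d B" using B(1) assms(3) by (auto simp: Zc_def VS_def)
  then have "dim W \<le> dim (VS d B)" using dim_subset'[OF _ VS_span fin_W0] by blast
  then show False using P1[OF assms(1) BA B(2) assms(5)] assms(4) by simp
qed

lemma bound2:
  assumes "Hyp d n A" "finite A" "W \<subseteq> Lo d" "g \<in> W" "g \<noteq> 0" "1 \<le> d"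
  shows "card (Zc d W A) < n"
proof (rule ccontr)
  assume "\<not> ?thesis"
  then obtain B where B: "B \<subseteq> Zc d W A" "card B = n"
    by (meson not_less obtain_subset_with_card_n)
  then have BA: "B \<subseteq> A" by (auto simp: Zc_def)
  have "\<forall>p\<in>B. bipoly_eval d g p = 0" using B(1) assms(4) by (auto simp: Zc_def)
  then show False using noLo[OF assms(1) BA B(2) _ assms(5) _ assms(6)] assms(3,4) by blast
qed




definition det3 :: "real \<times> real \<Rightarrow> real \<times> real \<Rightarrow> real \<times> real \<Rightarrow> real" where
  "det3 a b c = (fst b - fst a) * (snd c - snd a) - (snd b - snd a) * (fst c - fst a)"

definition sqd :: "real \<times> real \<Rightarrow> real \<times> real \<Rightarrow> real" where
  "sqd a b = (fst b - fst a)^2 + (snd b - snd a)^2"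

definition Fd :: "(real \<times> real) \<times> (real \<times> real) \<times> (real \<times> real) \<Rightarrow> real" where
  "Fd t = (case t of (q, a, b) \<Rightarrow> (det3 a b q)^2 / sqd a b)"

lemma kelly_step:
  fixes a1 a2 u1 u2 p1 p2 sx sz s0 :: real
  defines "L \<equiv> u1^2 + u2^2"
  defines "D \<equiv> u1 * (p2 - a2) - u2 * (p1 - a1)"
  assumes L: "L > 0" and D: "D \<noteq> 0"
    and s0: "s0 = ((p1 - a1) * u1 + (p2 - a2) * u2) / L"
    and sxz: "\<bar>sx - sz\<bar> \<le> \<bar>sz - s0\<bar>" "sx \<noteq> sz"
  shows "det3 (p1, p2) (a1 + sz * u1, a2 + sz * u2) (a1 + sx * u1, a2 + sx * u2) \<noteq> 0 \<and>
    (det3 (p1, p2) (a1 + sz * u1, a2 + sz * u2) (a1 + sx * u1, a2 + sx * u2))^2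
      / sqd (p1, p2) (a1 + sz * u1, a2 + sz * u2) < D^2 / L"
proof -
  let ?det = "det3 (p1, p2) (a1 + sz * u1, a2 + sz * u2) (a1 + sx * u1, a2 + sx * u2)"
  let ?q = "sqd (p1, p2) (a1 + sz * u1, a2 + sz * u2)"
  have e1: "?det = (sx - sz) * D"
    unfolding det3_def D_def by simp algebra
  have e2: "?q * L = (L * sz - ((p1 - a1) * u1 + (p2 - a2) * u2))^2 + D^2"
    unfolding sqd_def L_def D_def by simp algebra
  have e3: "L * sz - ((p1 - a1) * u1 + (p2 - a2) * u2) = L * (sz - s0)"
    using L s0 by (simp add: field_simps)
  have D2: "D^2 > 0" using D by simp
  have q: "?q * L = L^2 * (sz - s0)^2 + D^2" using e2 e3 by (simp add: power_mult_distrib)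
  have "L^2 * (sz - s0)^2 \<ge> 0" by simp
  then have "?q * L > 0" using q D2 by linarith
  then have qpos: "?q > 0" using L by (simp add: zero_less_mult_iff)
  have sq: "(sx - sz)^2 \<le> (sz - s0)^2" using sxz(1)
    by (metis abs_le_square_iff)
  have "?det^2 * L = (sx - sz)^2 * D^2 * L" by (simp add: e1 power_mult_distrib)
  also have "\<dots> \<le> (sz - s0)^2 * D^2 * L"
    using sq L D2 by (intro mult_right_mono) auto
  also have "\<dots> < D^2 * (?q * L) / L"
  proof -
    have "D^2 * (?q * L) / L = (sz - s0)^2 * D^2 * L + D^2 * D^2 / L"
      unfolding q using L by (simp add: field_simps power2_eq_square)
    moreover have "D^2 * D^2 / L > 0" using D2 L by simp
    ultimately show ?thesis by linarith
  qed
  finally have "?det^2 * L < D^2 * ?q" using L by simp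
  then have "?det^2 / ?q < D^2 / L" using L qpos by (simp add: field_simps)
  moreover have "?det \<noteq> 0" using e1 sxz(2) D by simp
  ultimately show ?thesis by blast
qed

lemma pick_pair:
  fixes r1 r2 s :: real
  assumes "r1 \<noteq> r2" "(s \<le> r1 \<and> s \<le> r2) \<or> (r1 \<le> s \<and> r2 \<le> s)"
  shows "\<exists>x z. x \<in> {r1, r2} \<and> z \<in> {r1, r2} \<and> x \<noteq> z \<and> \<bar>x - z\<bar> \<le> \<bar>z - s\<bar>"
proof (cases "s \<le> r1 \<and> s \<le> r2")
  case True
  show ?thesis
  proof (cases "r1 \<le> r2")
    case True then show ?thesis using \<open>s \<le> r1 \<and> s \<le> r2\<close> assms(1)
      by (intro exI[of _ r1] exI[of _ r2]) auto
  next
    case False then show ?thesis using \<open>s \<le> r1 \<and> s \<le> r2\<close> assms(1)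
      by (intro exI[of _ r2] exI[of _ r1]) auto
  qed
next
  case F: False
  then have "r1 \<le> s \<and> r2 \<le> s" using assms(2) by blast
  show ?thesis
  proof (cases "r1 \<le> r2")
    case True then show ?thesis using \<open>r1 \<le> s \<and> r2 \<le> s\<close> assms(1)
      by (intro exI[of _ r2] exI[of _ r1]) auto
  next
    case False then show ?thesis using \<open>r1 \<le> s \<and> r2 \<le> s\<close> assms(1)
      by (intro exI[of _ r1] exI[of _ r2]) auto
  qed
qed

lemma pick3:
  fixes r1 r2 r3 s :: real
  assumes "r1 \<noteq> r2" "r2 \<noteq> r3" "r1 \<noteq> r3"
  shows "\<exists>x z. x \<in> {r1, r2, r3} \<and> z \<in> {r1, r2, r3} \<and> x \<noteq> z \<and> \<bar>x - z\<bar> \<le> \<bar>z - s\<bar>"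
proof -
  have "((s \<le> r1 \<and> s \<le> r2) \<or> (r1 \<le> s \<and> r2 \<le> s)) \<or> ((s \<le> r1 \<and> s \<le> r3) \<or> (r1 \<le> s \<and> r3 \<le> s))
     \<or> ((s \<le> r2 \<and> s \<le> r3) \<or> (r2 \<le> s \<and> r3 \<le> s))" by linarith
  moreover have "{r1, r2} \<subseteq> {r1, r2, r3}" "{r1, r3} \<subseteq> {r1, r2, r3}" "{r2, r3} \<subseteq> {r1, r2, r3}" by auto
  ultimately show ?thesis using pick_pair[OF assms(1)] pick_pair[OF assms(3)] pick_pair[OF assms(2)]
    by (meson subsetD)
qed


lemma colhelp1: "(X::real) * u2 = Y * u1 \<Longrightarrow> X * (u1^2 + u2^2) = (X * u1 + Y * u2) * u1"
  by algebra
lemma colhelp2: "(X::real) * u2 = Y * u1 \<Longrightarrow> Y * (u1^2 + u2^2) = (X * u1 + Y * u2) * u2"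
  by algebra

lemma SG:
  assumes "finite S" "a0 \<in> S" "b0 \<in> S" "c0 \<in> S" "det3 a0 b0 c0 \<noteq> 0"
  shows "\<exists>a\<in>S. \<exists>b\<in>S. a \<noteq> b \<and> (\<forall>c\<in>S. det3 a b c = 0 \<longrightarrow> c = a \<or> c = b)"
proof -
  define Tr where "Tr = {(q, a, b). q \<in> S \<and> a \<in> S \<and> b \<in> S \<and> a \<noteq> b \<and> det3 a b q \<noteq> 0}"
  have finTr: "finite Tr"
    by (rule finite_subset[of _ "S \<times> S \<times> S"]) (auto simp: Tr_def assms(1))
  have "a0 \<noteq> b0" using assms(5) by (auto simp: det3_def)
  then have neTr: "(c0, a0, b0) \<in> Tr" using assms by (auto simp: Tr_def)
  then have "Tr \<noteq> {}" by blast
  define t where "t = arg_min_on Fd Tr"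
  have t: "t \<in> Tr" "\<not> (\<exists>t'\<in>Tr. Fd t' < Fd t)"
    using arg_min_if_finite[OF finTr \<open>Tr \<noteq> {}\<close>, of Fd] unfolding t_def by auto
  obtain p a b where pab: "t = (p, a, b)" by (cases t) auto
  have P: "p \<in> S" "a \<in> S" "b \<in> S" "a \<noteq> b" "det3 a b p \<noteq> 0" using t(1) pab by (auto simp: Tr_def)
  have "\<forall>c\<in>S. det3 a b c = 0 \<longrightarrow> c = a \<or> c = b"
  proof (intro ballI impI, rule ccontr)
    fix c assume c: "c \<in> S" "det3 a b c = 0" "\<not> (c = a \<or> c = b)"
    define u1 where "u1 = fst b - fst a"
    define u2 where "u2 = snd b - snd a"
    define L where "L = u1^2 + u2^2"
    have "u1 \<noteq> 0 \<or> u2 \<noteq> 0" using P(4) by (auto simp: u1_def u2_def prod_eq_iff)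
    then have L: "L > 0" unfolding L_def by (simp add: add_pos_nonneg sum_power2_gt_zero_iff)
    define Pt where "Pt \<sigma> = (fst a + \<sigma> * u1, snd a + \<sigma> * u2)" for \<sigma>
    define tc where "tc = ((fst c - fst a) * u1 + (snd c - snd a) * u2) / L"
    have dc: "(fst c - fst a) * u2 = (snd c - snd a) * u1"
      using c(2) unfolding det3_def u1_def u2_def by (simp add: algebra_simps)
    have "fst c = fst a + tc * u1"
    proof -
      have "(fst c - fst a) * L = ((fst c - fst a) * u1 + (snd c - snd a) * u2) * u1"
        unfolding L_def using colhelp1[OF dc] .
      then show ?thesis unfolding tc_def using L by (simp add: field_simps)
    qed
    moreover have "snd c = snd a + tc * u2"
    proof -
      have "(snd c - snd a) * L = ((fst c - fst a) * u1 + (snd c - snd a) * u2) * u2"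
        unfolding L_def using colhelp2[OF dc] .
      then show ?thesis unfolding tc_def using L by (simp add: field_simps)
    qed
    ultimately have Pc: "Pt tc = c" unfolding Pt_def by (simp add: prod_eq_iff)
    have Pa: "Pt 0 = a" and Pb: "Pt 1 = b" unfolding Pt_def u1_def u2_def by simp_all
    have tc0: "tc \<noteq> 0" using Pc Pa c(3) by auto
    have tc1: "tc \<noteq> 1" using Pc Pb c(3) by auto
    define s0 where "s0 = ((fst p - fst a) * u1 + (snd p - snd a) * u2) / L"
    obtain x z where xz: "x \<in> {0, 1, tc}" "z \<in> {0, 1, tc}" "x \<noteq> z" "\<bar>x - z\<bar> \<le> \<bar>z - s0\<bar>"
      using pick3[of 0 1 tc s0] tc0 tc1 by auto
    have inS: "Pt x \<in> S" "Pt z \<in> S" using xz(1,2) Pa Pb Pc P c(1) by auto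
    have D: "u1 * (snd p - snd a) - u2 * (fst p - fst a) \<noteq> 0"
      using P(5) unfolding det3_def u1_def u2_def .
    from kelly_step[of u1 u2 "snd p" "snd a" "fst p" "fst a" s0 x z, OF L[unfolded L_def] D
        s0_def[unfolded L_def] xz(4) xz(3)]
    have ks: "det3 p (Pt z) (Pt x) \<noteq> 0"
      "(det3 p (Pt z) (Pt x))^2 / sqd p (Pt z) < (u1 * (snd p - snd a) - u2 * (fst p - fst a))^2 / L"
      unfolding Pt_def L_def by simp_all
    have "p \<noteq> Pt z" using ks(1) by (auto simp: det3_def)
    then have "(Pt x, p, Pt z) \<in> Tr" using inS P(1) ks(1) by (auto simp: Tr_def)
    moreover have "Fd (Pt x, p, Pt z) < Fd t"
      using ks(2) unfolding Fd_def pab det3_def sqd_def L_def u1_def u2_def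
      by (simp add: power2_eq_square algebra_simps)
    ultimately show False using t(2) by blast
  qed
  then show ?thesis using P by blast
qed


lemma line_unique:
  fixes P1 P2 Q1 Q2 al be ga :: real
  assumes "(P1, P2) \<noteq> (Q1, Q2)" "al * P1 + be * P2 + ga = 0" "al * Q1 + be * Q2 + ga = 0"
  shows "\<exists>\<mu>. al = \<mu> * (P2 - Q2) \<and> be = \<mu> * (Q1 - P1) \<and> ga = \<mu> * (P1 * Q2 - Q1 * P2)"
proof -
  define D1 where "D1 = Q1 - P1"
  define D2 where "D2 = Q2 - P2"
  have "D1 \<noteq> 0 \<or> D2 \<noteq> 0" using assms(1) by (auto simp: D1_def D2_def)
  then have N: "D1^2 + D2^2 > 0" by (simp add: sum_power2_gt_zero_iff)
  have o: "al * D1 + be * D2 = 0" using assms(2,3) unfolding D1_def D2_def by algebra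
  define \<mu> where "\<mu> = (be * D1 - al * D2) / (D1^2 + D2^2)"
  have e1: "al * (D1^2 + D2^2) = (be * D1 - al * D2) * (- D2)" using o by algebra
  have "\<mu> * (- D2) = (be * D1 - al * D2) * (- D2) / (D1^2 + D2^2)" by (simp add: \<mu>_def)
  also have "\<dots> = al * (D1^2 + D2^2) / (D1^2 + D2^2)" using e1 by simp
  also have "\<dots> = al" using N by (intro nonzero_mult_div_cancel_right) linarith
  finally have 1: "al = \<mu> * (P2 - Q2)" unfolding D2_def by simp
  have e2: "be * (D1^2 + D2^2) = (be * D1 - al * D2) * D1" using o by algebra
  have "\<mu> * D1 = (be * D1 - al * D2) * D1 / (D1^2 + D2^2)" by (simp add: \<mu>_def)
  also have "\<dots> = be * (D1^2 + D2^2) / (D1^2 + D2^2)" using e2 by simp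
  also have "\<dots> = be" using N by (intro nonzero_mult_div_cancel_right) linarith
  finally have 2: "be = \<mu> * (Q1 - P1)" unfolding D1_def by simp
  have "ga = - (al * P1 + be * P2)" using assms(2) by simp
  also have "\<dots> = \<mu> * (P1 * Q2 - Q1 * P2)" unfolding 1 2 by algebra
  finally show ?thesis using 1 2 by blast
qed

lemma chart_K:
  fixes t w U1 U2 U3 b1 b2 b3 :: real
  assumes "t \<noteq> 0" "w \<noteq> 0" "w = U1 + t * U2 + t^2 * U3"
  shows "b1 * U1 + b2 * U2 + b3 * U3
    = w * ((b1 - b3 / t^2) * (U1 / w) + (b2 - b3 / t) * (U2 / w) + b3 / t^2)"
proof -
  have r: "(b1 - A) * U1 + (b2 - B) * U2 + (A * U1 + B * U2 + b3 * U3) = b1 * U1 + b2 * U2 + b3 * U3"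
    for A B :: real by algebra
  have "w * ((b1 - b3 / t^2) * (U1 / w) + (b2 - b3 / t) * (U2 / w) + b3 / t^2)
     = (b1 - b3 / t^2) * U1 + (b2 - b3 / t) * U2 + b3 * w / t^2"
    using assms(2) by (simp add: distrib_left)
  also have "b3 * w / t^2 = (b3 / t^2) * U1 + (b3 / t) * U2 + b3 * U3"
    using assms(1) unfolding assms(3) by (simp add: field_simps power2_eq_square)
  finally show ?thesis using r[of "b3 / t^2" "b3 / t"] by simp
qed

lemma projSG:
  fixes X :: "'a set" and u1 u2 u3 :: "'a \<Rightarrow> real"
  assumes fin: "finite X"
    and nz: "\<forall>x\<in>X. u1 x \<noteq> 0 \<or> u2 x \<noteq> 0 \<or> u3 x \<noteq> 0"
    and sp: "\<forall>a1 a2 a3. (a1 \<noteq> 0 \<or> a2 \<noteq> 0 \<or> a3 \<noteq> 0) \<longrightarrow>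
               (\<exists>x\<in>X. a1 * u1 x + a2 * u2 x + a3 * u3 x \<noteq> 0)"
  shows "\<exists>a1 a2 a3 x y. (a1 \<noteq> 0 \<or> a2 \<noteq> 0 \<or> a3 \<noteq> 0) \<and> x \<in> X \<and> y \<in> X \<and>
     a1 * u1 x + a2 * u2 x + a3 * u3 x = 0 \<and> a1 * u1 y + a2 * u2 y + a3 * u3 y = 0 \<and>
     (\<forall>b1 b2 b3. b1 * u1 x + b2 * u2 x + b3 * u3 x = 0 \<and> b1 * u1 y + b2 * u2 y + b3 * u3 y = 0
        \<longrightarrow> (\<exists>k. b1 = k * a1 \<and> b2 = k * a2 \<and> b3 = k * a3)) \<and>
     (\<forall>z\<in>X. a1 * u1 z + a2 * u2 z + a3 * u3 z = 0 \<longrightarrow>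
        (\<forall>b1 b2 b3. b1 * u1 x + b2 * u2 x + b3 * u3 x = 0 \<longrightarrow> b1 * u1 z + b2 * u2 z + b3 * u3 z = 0) \<or>
        (\<forall>b1 b2 b3. b1 * u1 y + b2 * u2 y + b3 * u3 y = 0 \<longrightarrow> b1 * u1 z + b2 * u2 z + b3 * u3 z = 0))"
proof -
  define R where "R x = {s::real. (\<Sum>i::nat\<le>2. (if i = 0 then u1 x else if i = 1 then u2 x else u3 x) * s ^ i) = 0}" for x
  have finR: "finite (R x)" if "x \<in> X" for x
  proof -
    have "\<exists>k::nat\<le>2. (if k = 0 then u1 x else if k = 1 then u2 x else u3 x) \<noteq> 0"
    proof (cases "u1 x \<noteq> 0")
      case True then show ?thesis by (intro exI[of _ 0]) auto
    next
      case F1: False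
      show ?thesis
      proof (cases "u2 x \<noteq> 0")
        case True then show ?thesis by (intro exI[of _ 1]) auto
      next
        case False then show ?thesis using F1 nz that by (intro exI[of _ 2]) auto
      qed
    qed
    then obtain k :: nat where "k \<le> 2" "(if k = 0 then u1 x else if k = 1 then u2 x else u3 x) \<noteq> 0" by blast
    from polyfun_roots_finite[of "\<lambda>i. if i = 0 then u1 x else if i = 1 then u2 x else u3 x" k 2, OF this(2) this(1)]
    show ?thesis unfolding R_def by simp
  qed
  have "finite (insert 0 (\<Union>x\<in>X. R x))" using fin finR by auto
  then obtain t where t: "t \<notin> insert 0 (\<Union>x\<in>X. R x)"
    using ex_new_if_finite[OF infinite_UNIV_char_0] by blast
  define w where "w x = u1 x + t * u2 x + t^2 * u3 x" for x
  have t0: "t \<noteq> 0" using t by auto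
  have w0: "w x \<noteq> 0" if "x \<in> X" for x
  proof
    assume "w x = 0"
    then have "t \<in> R x" unfolding R_def w_def by (simp add: numeral_2_eq_2 algebra_simps power2_eq_square)
    then show False using t that by auto
  qed
  define v where "v x = (u1 x / w x, u2 x / w x)" for x
  define lin where "lin b1 b2 b3 q = (b1 - b3 / t^2) * fst q + (b2 - b3 / t) * snd q + b3 / t^2"
    for b1 b2 b3 :: real and q :: "real \<times> real"
  have K: "b1 * u1 x + b2 * u2 x + b3 * u3 x = w x * lin b1 b2 b3 (v x)" if "x \<in> X" for x b1 b2 b3
    unfolding lin_def v_def using chart_K[OF t0 w0[OF that] w_def] by simp
  have Kz: "b1 * u1 x + b2 * u2 x + b3 * u3 x = 0 \<longleftrightarrow> lin b1 b2 b3 (v x) = 0" if "x \<in> X" for x b1 b2 b3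
    using K[OF that] w0[OF that] by simp
  define inv where "inv al be ga = (al + ga, be + ga * t, ga * t^2)" for al be ga :: real
  have lin_inv: "lin (al + ga) (be + ga * t) (ga * t^2) q = al * fst q + be * snd q + ga" for al be ga q
    unfolding lin_def using t0 by (simp add: field_simps power2_eq_square)
  have inv_nz: "al + ga \<noteq> 0 \<or> be + ga * t \<noteq> 0 \<or> ga * t^2 \<noteq> 0" if "al \<noteq> 0 \<or> be \<noteq> 0" for al be ga
    using that t0 by auto
  have ncol: "\<exists>P\<in>v ` X. \<exists>Q\<in>v ` X. \<exists>Z\<in>v ` X. det3 P Q Z \<noteq> 0"
  proof (rule ccontr)
    assume allcol: "\<not> ?thesis"
    obtain x0 where x0: "x0 \<in> X" using sp[rule_format, of 1 0 0] by auto
    obtain al be ga where line: "al \<noteq> 0 \<or> be \<noteq> 0" "\<forall>Z\<in>v ` X. al * fst Z + be * snd Z + ga = 0"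
    proof (cases "\<exists>Q\<in>v ` X. Q \<noteq> v x0")
      case True
      then obtain Q where Q: "Q \<in> v ` X" "Q \<noteq> v x0" by blast
      let ?P = "v x0"
      have "\<forall>Z\<in>v ` X. (snd ?P - snd Q) * fst Z + (fst Q - fst ?P) * snd Z + (fst ?P * snd Q - fst Q * snd ?P) = 0"
      proof
        fix Z assume "Z \<in> v ` X"
        then have "det3 ?P Q Z = 0" using allcol x0 Q(1) by blast
        then show "(snd ?P - snd Q) * fst Z + (fst Q - fst ?P) * snd Z + (fst ?P * snd Q - fst Q * snd ?P) = 0"
          unfolding det3_def by algebra
      qed
      moreover have "snd ?P - snd Q \<noteq> 0 \<or> fst Q - fst ?P \<noteq> 0" using Q(2) by (auto simp: prod_eq_iff)
      ultimately show ?thesis using that by blast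
    next
      case False
      then have "\<forall>Z\<in>v ` X. 1 * fst Z + 0 * snd Z + (- fst (v x0)) = 0" by auto
      then show ?thesis using that[of 1 0 "- fst (v x0)"] by auto
    qed
    have "\<forall>x\<in>X. (al + ga) * u1 x + (be + ga * t) * u2 x + (ga * t^2) * u3 x = 0"
      using Kz lin_inv line(2) by auto
    then show False using sp inv_nz[OF line(1)] by blast
  qed
  then obtain P0 Q0 Z0 where "P0 \<in> v ` X" "Q0 \<in> v ` X" "Z0 \<in> v ` X" "det3 P0 Q0 Z0 \<noteq> 0" by blast
  from SG[OF finite_imageI[OF fin] this] obtain P Q where PQ: "P \<in> v ` X" "Q \<in> v ` X" "P \<noteq> Q"
    "\<forall>Z\<in>v ` X. det3 P Q Z = 0 \<longrightarrow> Z = P \<or> Z = Q" by blast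
  obtain x y where xy: "x \<in> X" "y \<in> X" "P = v x" "Q = v y" using PQ(1,2) by blast
  define al where "al = snd P - snd Q"
  define be where "be = fst Q - fst P"
  define ga where "ga = fst P * snd Q - fst Q * snd P"
  have linedet: "al * fst Z + be * snd Z + ga = det3 P Q Z" for Z
    unfolding al_def be_def ga_def det3_def by algebra
  have albe: "al \<noteq> 0 \<or> be \<noteq> 0" using PQ(3) by (auto simp: al_def be_def prod_eq_iff)
  define a1 where "a1 = al + ga"
  define a2 where "a2 = be + ga * t"
  define a3 where "a3 = ga * t^2"
  have anz: "a1 \<noteq> 0 \<or> a2 \<noteq> 0 \<or> a3 \<noteq> 0" using inv_nz[OF albe] unfolding a1_def a2_def a3_def .
  have la: "lin a1 a2 a3 q = det3 P Q q" for q
    unfolding a1_def a2_def a3_def lin_inv linedet ..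
  have ax: "a1 * u1 x + a2 * u2 x + a3 * u3 x = 0" using Kz[OF xy(1)] la xy(3)
    by (simp add: det3_def)
  have ay: "a1 * u1 y + a2 * u2 y + a3 * u3 y = 0" using Kz[OF xy(2)] la xy(4)
    by (simp add: det3_def)
  have uniq: "\<exists>k. b1 = k * a1 \<and> b2 = k * a2 \<and> b3 = k * a3"
    if "b1 * u1 x + b2 * u2 x + b3 * u3 x = 0" "b1 * u1 y + b2 * u2 y + b3 * u3 y = 0" for b1 b2 b3
  proof -
    define al' where "al' = b1 - b3 / t^2"
    define be' where "be' = b2 - b3 / t"
    define ga' where "ga' = b3 / t^2"
    have "lin b1 b2 b3 P = 0" "lin b1 b2 b3 Q = 0" using that Kz xy by auto
    then have "al' * fst P + be' * snd P + ga' = 0" "al' * fst Q + be' * snd Q + ga' = 0"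
      unfolding lin_def al'_def be'_def ga'_def by auto
    from line_unique[of "fst P" "snd P" "fst Q" "snd Q", OF _ this] PQ(3)
    obtain \<mu> where \<mu>: "al' = \<mu> * al" "be' = \<mu> * be" "ga' = \<mu> * ga"
      unfolding al_def be_def ga_def by (auto simp: prod_eq_iff)
    have "b1 = al' + ga'" "b2 = be' + ga' * t" "b3 = ga' * t^2"
      unfolding al'_def be'_def ga'_def using t0 by (auto simp: field_simps power2_eq_square)
    then show ?thesis unfolding a1_def a2_def a3_def \<mu> by (intro exI[of _ \<mu>]) (simp add: algebra_simps)
  qed
  have cls: "(\<forall>b1 b2 b3. b1 * u1 x + b2 * u2 x + b3 * u3 x = 0 \<longrightarrow> b1 * u1 z + b2 * u2 z + b3 * u3 z = 0) \<or>
        (\<forall>b1 b2 b3. b1 * u1 y + b2 * u2 y + b3 * u3 y = 0 \<longrightarrow> b1 * u1 z + b2 * u2 z + b3 * u3 z = 0)"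
    if "z \<in> X" "a1 * u1 z + a2 * u2 z + a3 * u3 z = 0" for z
  proof -
    have "det3 P Q (v z) = 0" using that Kz la by auto
    then have "v z = v x \<or> v z = v y" using PQ(4) that(1) xy by auto
    then show ?thesis using Kz that(1) xy(1,2) by auto
  qed
  show ?thesis
    apply (rule exI[of _ a1], rule exI[of _ a2], rule exI[of _ a3], rule exI[of _ x], rule exI[of _ y])
    using anz xy(1,2) ax ay uniq cls by blast
qed




definition good :: "nat \<Rightarrow> (real \<times> real) set \<Rightarrow> (real \<times> real) list \<Rightarrow> bool" where
  "good d A xs \<longleftrightarrow> set xs \<subseteq> A \<and> distinct xs \<and> dim (VS d (set xs)) + length xs = dim (Pd d) \<and>
     (VS d (set xs) \<inter> Lo d \<subseteq> {0} \<or> dim (VS d (set xs) \<inter> Lo d) + length xs \<le> dim (Lo d))"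

lemma VS_empty: "VS d {} = Pd d" by (auto simp: VS_def)

lemma good_Nil: "good d A []"
  unfolding good_def using Lo_Pd[of d] by (simp add: VS_empty Int_absorb1 Int_absorb2)

lemma ev_lin_phi: "bipoly_eval d (x + y) p = bipoly_eval d x p + bipoly_eval d y p"
  "bipoly_eval d (r *\<^sub>R x) p = r * bipoly_eval d x p"
  by (simp_all add: ev_add ev_scale)

lemma good_step:
  assumes H: "Hyp d n A" and fA: "finite A" and d1: "1 \<le> d"
    and g: "good d A xs" and len: "length xs + 4 \<le> dim (Pd d)"
  shows "card A - 2 * (n - 1) \<le> card {p. good d A (p # xs)}"
proof -
  let ?S = "set xs"
  let ?V = "VS d ?S"
  define Bad1 where "Bad1 = Zc d ?V A"
  define Bad2 where "Bad2 = (if ?V \<inter> Lo d \<subseteq> {0} then {} else Zc d (?V \<inter> Lo d) A)"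
  have dimV: "dim ?V + length xs = dim (Pd d)" using g unfolding good_def by blast
  have VP: "?V \<subseteq> Pd d" by (auto simp: VS_def)
  have c1: "card Bad1 \<le> n - 1"
    using bound1[OF H fA VP _ d1] dimV len unfolding Bad1_def by fastforce
  have c2: "card Bad2 \<le> n - 1"
  proof (cases "?V \<inter> Lo d \<subseteq> {0}")
    case True then show ?thesis by (simp add: Bad2_def)
  next
    case False
    then obtain g0 where "g0 \<in> ?V \<inter> Lo d" "g0 \<noteq> 0" by blast
    from bound2[OF H fA _ this d1] False show ?thesis by (simp add: Bad2_def)
  qed
  have sub: "A - Bad1 - Bad2 \<subseteq> {p. good d A (p # xs)}"
  proof
    fix p assume p: "p \<in> A - Bad1 - Bad2"
    have pS: "p \<notin> ?S" using p g unfolding Bad1_def Zc_def VS_def good_def by auto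
    obtain g1 where g1: "g1 \<in> ?V" "bipoly_eval d g1 p \<noteq> 0" using p unfolding Bad1_def Zc_def by auto
    have dd: "dim ?V = dim (VS d (insert p ?S)) + 1"
      unfolding VS_insert
      by (rule dim_drop[where \<phi>="\<lambda>c. bipoly_eval d c p", OF subspace_VS VS_span fin_W0 _ _ g1(1) g1(2)])
        (auto simp: ev_add ev_scale)
    have lo: "VS d (insert p ?S) \<inter> Lo d \<subseteq> {0} \<or> dim (VS d (insert p ?S) \<inter> Lo d) + Suc (length xs) \<le> dim (Lo d)"
    proof (cases "?V \<inter> Lo d \<subseteq> {0}")
      case True
      then show ?thesis unfolding VS_insert by auto
    next
      case False
      then have "p \<notin> Zc d (?V \<inter> Lo d) A" using p by (simp add: Bad2_def)
      then obtain g2 where g2: "g2 \<in> ?V \<inter> Lo d" "bipoly_eval d g2 p \<noteq> 0" using p unfolding Zc_def by auto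
      have eqI: "VS d (insert p ?S) \<inter> Lo d = {x \<in> ?V \<inter> Lo d. bipoly_eval d x p = 0}"
        unfolding VS_insert by auto
      have "dim (?V \<inter> Lo d) = dim (VS d (insert p ?S) \<inter> Lo d) + 1"
        unfolding eqI
        by (rule dim_drop[where \<phi>="\<lambda>c. bipoly_eval d c p", OF subspace_inter[OF subspace_VS subspace_Lo] _ fin_W0])
          (use VS_span g2 in \<open>auto simp: ev_add ev_scale\<close>)
      moreover have "dim (?V \<inter> Lo d) + length xs \<le> dim (Lo d)" using g False unfolding good_def by blast
      ultimately show ?thesis by simp
    qed
    show "p \<in> {p. good d A (p # xs)}"
      using p pS g dd lo dimV unfolding good_def by auto
  qed
  have fB1: "finite Bad1" by (rule finite_subset[OF _ fA]) (auto simp: Bad1_def Zc_def)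
  have fB2: "finite Bad2" by (rule finite_subset[OF _ fA]) (auto simp: Bad2_def Zc_def)
  have i1: "card A - card Bad1 \<le> card (A - Bad1)" by (rule diff_card_le_card_Diff[OF fB1])
  have i2: "card (A - Bad1) - card Bad2 \<le> card (A - Bad1 - Bad2)" by (rule diff_card_le_card_Diff[OF fB2])
  have "card A - card Bad1 - card Bad2 \<le> card (A - Bad1 - Bad2)" using i1 i2 by linarith
  also have "\<dots> \<le> card {p. good d A (p # xs)}"
  proof (rule card_mono[OF _ sub])
    show "finite {p. good d A (p # xs)}" by (rule finite_subset[OF _ fA]) (auto simp: good_def)
  qed
  finally show ?thesis using c1 c2 by linarith
qed

lemma good_count:
  assumes H: "Hyp d n A" and fA: "finite A" and d1: "1 \<le> d"
  shows "j + 3 \<le> dim (Pd d) \<Longrightarrow> (card A - 2 * (n - 1)) ^ j \<le> card {xs. good d A xs \<and> length xs = j}"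
proof (induct j)
  case 0
  have "{xs. good d A xs \<and> length xs = 0} = {[]}" using good_Nil by auto
  then show ?case by simp
next
  case (Suc j)
  let ?G = "\<lambda>j. {xs. good d A xs \<and> length xs = j}"
  have finG: "finite (?G j)" for j
    by (rule finite_subset[OF _ finite_lists_length_eq[OF fA, of j]]) (auto simp: good_def)
  have IH: "(card A - 2 * (n - 1)) ^ j \<le> card (?G j)" using Suc by simp
  let ?Sg = "Sigma (?G j) (\<lambda>xs. {p. good d A (p # xs)})"
  have fin2: "finite {p. good d A (p # xs)}" for xs
    by (rule finite_subset[OF _ fA]) (auto simp: good_def)
  have "card (?G j) * (card A - 2 * (n - 1)) \<le> (\<Sum>xs\<in>?G j. card {p. good d A (p # xs)})"
  proof -
    have "card A - 2 * (n - 1) \<le> card {p. good d A (p # xs)}" if "xs \<in> ?G j" for xs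
    proof -
      from that have "good d A xs" "length xs + 4 \<le> dim (Pd d)" using Suc.prems by auto
      from good_step[OF H fA d1 this] show ?thesis .
    qed
    from sum_bounded_below[of "?G j" "card A - 2 * (n - 1)", OF this] show ?thesis by simp
  qed
  also have "\<dots> = card ?Sg" using finG fin2 by (simp add: card_SigmaI)
  also have "\<dots> = card ((\<lambda>(xs, p). p # xs) ` ?Sg)"
    by (rule card_image[symmetric]) (auto simp: inj_on_def)
  also have "\<dots> \<le> card (?G (Suc j))"
    by (rule card_mono[OF finG]) auto
  finally have "card (?G j) * (card A - 2 * (n - 1)) \<le> card (?G (Suc j))" .
  moreover have "(card A - 2 * (n - 1)) ^ Suc j \<le> card (?G j) * (card A - 2 * (n - 1))"
    using IH by (simp add: mult.commute mult_le_mono1)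
  ultimately show ?case by linarith
qed


lemma good_curve:
  assumes H: "Hyp d n A" and fA: "finite A" and d3: "3 \<le> d"
    and nA: "\<not> (\<exists>C. is_curve d C \<and> A \<subseteq> C)"
    and g: "good d A T" and lenT: "length T + 3 = dim (Pd d)"
  shows "\<exists>C \<in> ordinary_curves d (real (2 * n + 1) - real ((d + 2) choose 2)) A. set T \<subseteq> C"
proof -
  have d1: "1 \<le> d" using d3 by simp
  let ?S = "set T"
  let ?V = "VS d ?S"
  have dimV: "dim ?V = 3" using g lenT unfolding good_def by simp
  have DN: "(d + 2) choose 2 \<le> dim (Pd d)" by (rule dim_Pd)
  have DLo: "dim (Lo d) + (d + 1) \<le> (d + 2) choose 2" by (rule dim_Lo[OF d1])
  have VLo: "?V \<inter> Lo d \<subseteq> {0}"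
  proof -
    have "\<not> (dim (?V \<inter> Lo d) + length T \<le> dim (Lo d))" using DN DLo lenT d3 by linarith
    then show ?thesis using g unfolding good_def by blast
  qed
  obtain f1 f2 f3 where f: "f1 \<in> ?V" "f2 \<in> ?V" "f3 \<in> ?V"
    "\<And>c. c \<in> ?V \<Longrightarrow> \<exists>a1 a2 a3. c = a1 *\<^sub>R f1 + a2 *\<^sub>R f2 + a3 *\<^sub>R f3"
    "\<And>a1 a2 a3. a1 *\<^sub>R f1 + a2 *\<^sub>R f2 + a3 *\<^sub>R f3 = 0 \<Longrightarrow> a1 = 0 \<and> a2 = 0 \<and> a3 = 0"
    using dim3_basis[OF dimV] by blast
  define comb where "comb a1 a2 a3 = a1 *\<^sub>R f1 + a2 *\<^sub>R f2 + a3 *\<^sub>R f3" for a1 a2 a3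
  define u1 where "u1 x = bipoly_eval d f1 x" for x
  define u2 where "u2 x = bipoly_eval d f2 x" for x
  define u3 where "u3 x = bipoly_eval d f3 x" for x
  have evc: "bipoly_eval d (comb a1 a2 a3) p = a1 * u1 p + a2 * u2 p + a3 * u3 p" for a1 a2 a3 p
    by (simp add: comb_def u1_def u2_def u3_def ev_add ev_scale)
  have cV: "comb a1 a2 a3 \<in> ?V" for a1 a2 a3
    unfolding comb_def using f(1-3) subspace_VS
    by (simp add: subspace_add subspace_scale)
  have cnz: "comb a1 a2 a3 \<noteq> 0" if "a1 \<noteq> 0 \<or> a2 \<noteq> 0 \<or> a3 \<noteq> 0" for a1 a2 a3
    using f(5) that unfolding comb_def by blast
  have cdeg: "comb a1 a2 a3 \<in> Pd d \<and> comb a1 a2 a3 \<notin> Lo d" if "a1 \<noteq> 0 \<or> a2 \<noteq> 0 \<or> a3 \<noteq> 0" for a1 a2 a3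
    using cV[of a1 a2 a3] cnz[OF that] VLo unfolding VS_def by blast
  have cV': "\<exists>a1 a2 a3. c = comb a1 a2 a3" if "c \<in> ?V" for c
    using f(4)[OF that] unfolding comb_def by blast
  define X where "X = A - Zc d ?V A"
  have XA: "X \<subseteq> A" by (auto simp: X_def)
  have nz: "\<forall>x\<in>X. u1 x \<noteq> 0 \<or> u2 x \<noteq> 0 \<or> u3 x \<noteq> 0"
  proof
    fix x assume "x \<in> X"
    then obtain c where c: "c \<in> ?V" "bipoly_eval d c x \<noteq> 0" by (auto simp: X_def Zc_def)
    obtain a1 a2 a3 where "c = comb a1 a2 a3" using cV'[OF c(1)] by blast
    then show "u1 x \<noteq> 0 \<or> u2 x \<noteq> 0 \<or> u3 x \<noteq> 0" using c(2) evc by auto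
  qed
  have sp: "\<forall>a1 a2 a3. (a1 \<noteq> 0 \<or> a2 \<noteq> 0 \<or> a3 \<noteq> 0) \<longrightarrow>
               (\<exists>x\<in>X. a1 * u1 x + a2 * u2 x + a3 * u3 x \<noteq> 0)"
  proof (intro allI impI, rule ccontr)
    fix a1 a2 a3 assume a: "a1 \<noteq> 0 \<or> a2 \<noteq> 0 \<or> a3 \<noteq> 0"
      and "\<not> (\<exists>x\<in>X. a1 * u1 x + a2 * u2 x + a3 * u3 x \<noteq> 0)"
    then have z: "\<forall>x\<in>X. bipoly_eval d (comb a1 a2 a3) x = 0" using evc by auto
    have "A \<subseteq> {p. bipoly_eval d (comb a1 a2 a3) p = 0}"
    proof
      fix p assume "p \<in> A"
      show "p \<in> {p. bipoly_eval d (comb a1 a2 a3) p = 0}"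
      proof (cases "p \<in> X")
        case True then show ?thesis using z by auto
      next
        case False then have "p \<in> Zc d ?V A" using \<open>p \<in> A\<close> by (auto simp: X_def)
        then show ?thesis using cV by (auto simp: Zc_def)
      qed
    qed
    moreover have "is_curve d {p. bipoly_eval d (comb a1 a2 a3) p = 0}"
      using curve_of cdeg[OF a] by blast
    ultimately show False using nA by blast
  qed
  have fX: "finite X" using fA XA finite_subset by blast
  from projSG[OF fX nz sp] obtain a1 a2 a3 x y where
    a: "a1 \<noteq> 0 \<or> a2 \<noteq> 0 \<or> a3 \<noteq> 0" and xy: "x \<in> X" "y \<in> X"
    and ax: "a1 * u1 x + a2 * u2 x + a3 * u3 x = 0" and ay: "a1 * u1 y + a2 * u2 y + a3 * u3 y = 0"
    and uq: "\<forall>b1 b2 b3. b1 * u1 x + b2 * u2 x + b3 * u3 x = 0 \<and> b1 * u1 y + b2 * u2 y + b3 * u3 y = 0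
        \<longrightarrow> (\<exists>k. b1 = k * a1 \<and> b2 = k * a2 \<and> b3 = k * a3)"
    and cl: "\<forall>z\<in>X. a1 * u1 z + a2 * u2 z + a3 * u3 z = 0 \<longrightarrow>
        (\<forall>b1 b2 b3. b1 * u1 x + b2 * u2 x + b3 * u3 x = 0 \<longrightarrow> b1 * u1 z + b2 * u2 z + b3 * u3 z = 0) \<or>
        (\<forall>b1 b2 b3. b1 * u1 y + b2 * u2 y + b3 * u3 y = 0 \<longrightarrow> b1 * u1 z + b2 * u2 z + b3 * u3 z = 0)"
    by blast
  define fc where "fc = comb a1 a2 a3"
  define C where "C = {p. bipoly_eval d fc p = 0}"
  have Ccurve: "is_curve d C" unfolding C_def fc_def using curve_of cdeg[OF a] by blast
  have TC: "?S \<subseteq> C" using cV[of a1 a2 a3] unfolding C_def fc_def VS_def by auto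
  have TA: "?S \<subseteq> A" using g unfolding good_def by blast
  have xC: "x \<in> C" "y \<in> C" using ax ay evc unfolding C_def fc_def by auto
  have det: "determined d A C"
    unfolding determined_def
  proof (intro conjI allI impI)
    show "is_curve d C" by (rule Ccurve)
    fix C2 assume C2: "is_curve d C2 \<and> C \<inter> A \<subseteq> C2 \<inter> A"
    then obtain gg where gg: "has_degree d gg" "C2 = {p. bipoly_eval d gg p = 0}"
      unfolding is_curve_def by blast
    have ggP: "gg \<in> Pd d" using gg(1) has_degree_iff by blast
    have gg0: "gg \<noteq> 0" using gg(1) unfolding has_degree_def by auto
    have "gg \<in> ?V" using ggP TC TA C2 gg(2) unfolding VS_def by blast
    then obtain b1 b2 b3 where b: "gg = comb b1 b2 b3" using cV' by blast
    have "x \<in> C2" "y \<in> C2" using xC xy XA C2 by auto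
    then have "b1 * u1 x + b2 * u2 x + b3 * u3 x = 0" "b1 * u1 y + b2 * u2 y + b3 * u3 y = 0"
      using gg(2) b evc by auto
    then obtain k where k: "b1 = k * a1" "b2 = k * a2" "b3 = k * a3" using uq by blast
    have "\<And>p. bipoly_eval d gg p = k * bipoly_eval d fc p"
      unfolding b fc_def evc k by (simp add: algebra_simps)
    moreover have "k \<noteq> 0" using gg0 b k cnz unfolding comb_def by auto
    ultimately show "C = C2" unfolding C_def gg(2) by auto
  qed
  define G1 where "G1 = Zc d (VS d (insert x ?S)) A"
  define G2 where "G2 = Zc d (VS d (insert y ?S)) A"
  have cardG: "card (Zc d (VS d (insert z ?S)) A) < n" if "z \<in> X" for z
  proof -
    from that have "z \<notin> Zc d ?V A" "z \<in> A" by (auto simp: X_def)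
    then obtain g1 where g1: "g1 \<in> ?V" "bipoly_eval d g1 z \<noteq> 0" unfolding Zc_def by blast
    have "dim ?V = dim (VS d (insert z ?S)) + 1"
      unfolding VS_insert
      by (rule dim_drop[where \<phi>="\<lambda>c. bipoly_eval d c z", OF subspace_VS VS_span fin_W0 _ _ g1(1) g1(2)])
        (auto simp: ev_add ev_scale)
    then have "dim (VS d (insert z ?S)) = 2" using dimV by simp
    moreover have "VS d (insert z ?S) \<subseteq> Pd d" by (auto simp: VS_def)
    ultimately show ?thesis using bound1[OF H fA _ _ d1] by simp
  qed
  have c1: "card G1 < n" "card G2 < n" using cardG xy unfolding G1_def G2_def by auto
  have CA: "C \<inter> A \<subseteq> G1 \<union> G2"
  proof
    fix z assume z: "z \<in> C \<inter> A"
    show "z \<in> G1 \<union> G2"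
    proof (cases "z \<in> X")
      case False
      then have "z \<in> Zc d ?V A" using z by (auto simp: X_def)
      then have "z \<in> G1" unfolding G1_def Zc_def VS_insert by auto
      then show ?thesis by blast
    next
      case True
      have "a1 * u1 z + a2 * u2 z + a3 * u3 z = 0" using z evc unfolding C_def fc_def by auto
      then have cz: "(\<forall>b1 b2 b3. b1 * u1 x + b2 * u2 x + b3 * u3 x = 0 \<longrightarrow> b1 * u1 z + b2 * u2 z + b3 * u3 z = 0) \<or>
        (\<forall>b1 b2 b3. b1 * u1 y + b2 * u2 y + b3 * u3 y = 0 \<longrightarrow> b1 * u1 z + b2 * u2 z + b3 * u3 z = 0)"
        using cl True by blast
      have G: "z \<in> Zc d (VS d (insert w ?S)) A"
        if "\<forall>b1 b2 b3. b1 * u1 w + b2 * u2 w + b3 * u3 w = 0 \<longrightarrow> b1 * u1 z + b2 * u2 z + b3 * u3 z = 0" for w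
        unfolding Zc_def
      proof (intro CollectI conjI ballI)
        show "z \<in> A" using z by blast
        fix c assume c: "c \<in> VS d (insert w ?S)"
        then have "c \<in> ?V" "bipoly_eval d c w = 0" unfolding VS_insert by auto
        then obtain b1 b2 b3 where "c = comb b1 b2 b3" "b1 * u1 w + b2 * u2 w + b3 * u3 w = 0"
          using cV' evc by metis
        then show "bipoly_eval d c z = 0" using that evc by auto
      qed
      from cz show ?thesis using G unfolding G1_def G2_def by blast
    qed
  qed
  have SG12: "?S \<subseteq> G1 \<inter> G2" using TA unfolding G1_def G2_def Zc_def VS_def by auto
  have fG: "finite G1" "finite G2" unfolding G1_def G2_def Zc_def using fA by auto
  have "card (C \<inter> A) + card (G1 \<inter> G2) \<le> card (G1 \<union> G2) + card (G1 \<inter> G2)"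
    using card_mono[OF finite_UnI[OF fG] CA] by simp
  also have "\<dots> = card G1 + card G2" using card_Un_Int[OF fG] by simp
  finally have "card (C \<inter> A) + card ?S \<le> card G1 + card G2"
    using card_mono[OF finite_subset[OF inf_le1 fG(1)] SG12] by linarith
  moreover have "card ?S = length T" using g unfolding good_def by (simp add: distinct_card)
  ultimately have "card (C \<inter> A) + ((d + 2) choose 2) \<le> 2 * n + 1"
    using c1 DN lenT by linarith
  then have "real (card (C \<inter> A)) \<le> real (2 * n + 1) - real ((d + 2) choose 2)" by linarith
  then have "C \<in> ordinary_curves d (real (2 * n + 1) - real ((d + 2) choose 2)) A"
    unfolding ordinary_curves_def using det by blast
  then show ?thesis using TC by blast
qed




lemma ord_finite:
  assumes "finite A"
  shows "finite (ordinary_curves d r A)"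
proof -
  have inj: "inj_on (\<lambda>C. C \<inter> A) (ordinary_curves d r A)"
  proof (rule inj_onI)
    fix C C' assume C: "C \<in> ordinary_curves d r A" "C' \<in> ordinary_curves d r A" "C \<inter> A = C' \<inter> A"
    then have "determined d A C" "is_curve d C'" by (auto simp: ordinary_curves_def determined_def)
    then show "C = C'" using C(3) unfolding determined_def by auto
  qed
  have "finite ((\<lambda>C. C \<inter> A) ` ordinary_curves d r A)"
    by (rule finite_subset[of _ "Pow A"]) (use assms in auto)
  then show ?thesis using finite_imageD[OF _ inj] by blast
qed

theorem theorem7:
  fixes d n :: nat
  assumes "d \<ge> 3" and "n \<ge> ((d + 2) choose 2) - 1"
  shows "\<exists>c4 c5 :: real. c4 > 0 \<and> c5 > 0 \<and>
    (\<forall>A :: (real \<times> real) set. finite A \<longrightarrow>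
       (\<forall>B \<subseteq> A. card B = n \<longrightarrow>
          (\<forall>C1 C2. is_curve d C1 \<and> is_curve d C2 \<and> B \<subseteq> C1 \<and> B \<subseteq> C2 \<longrightarrow> C1 = C2)) \<longrightarrow>
       real (card A) > c4 \<longrightarrow>
       \<not> (\<exists>C. is_curve d C \<and> A \<subseteq> C) \<longrightarrow>
       real (card (ordinary_curves d (real (2 * n + 1) - real ((d + 2) choose 2)) A))
         \<ge> c5 * real (card A) ^ (((d + 2) choose 2) - 3))"
proof -
  define N where "N = (d + 2) choose 2"
  have N: "N = (d + 1) * (d + 2) div 2" unfolding N_def using card_Ix card_Ix_choose by metis
  have "(3 + 1) * (3 + 2) \<le> (d + 1) * (d + 2)" using assms(1) by (intro mult_le_mono) auto
  then have "20 \<le> (d + 1) * (d + 2)" by simp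
  then have N10: "10 \<le> N" unfolding N by simp
  define K where "K = 2 * n + 1 - N"
  define L0 where "L0 = N - 3"
  have nN: "N - 1 \<le> n" using assms(2) unfolding N_def .
  have K1: "1 \<le> K" "K \<le> 2 * n" using nN N10 unfolding K_def by auto
  define c5 where "c5 = 1 / (2 * real K) ^ L0"
  have c5: "c5 > 0" using K1 unfolding c5_def by simp
  have c4: "real (4 * n) > 0" using nN N10 by simp
  show ?thesis
  proof (rule exI[of _ "real (4 * n)"], rule exI[of _ c5], intro conjI c4 c5 allI impI)
    fix A :: "(real \<times> real) set"
    assume fA: "finite A"
      and H0: "\<forall>B \<subseteq> A. card B = n \<longrightarrow>
          (\<forall>C1 C2. is_curve d C1 \<and> is_curve d C2 \<and> B \<subseteq> C1 \<and> B \<subseteq> C2 \<longrightarrow> C1 = C2)"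
      and mA: "real (card A) > real (4 * n)"
      and nA: "\<not> (\<exists>C. is_curve d C \<and> A \<subseteq> C)"
    have H: "Hyp d n A" unfolding Hyp_def using H0 .
    have d1: "1 \<le> d" using assms(1) by simp
    define m where "m = card A"
    define D where "D = dim (Pd d)"
    define L where "L = D - 3"
    have DN: "N \<le> D" unfolding D_def N_def by (rule dim_Pd)
    have LL0: "L0 \<le> L" "L + 3 = D" using DN N10 unfolding L_def L0_def by auto
    define Ord where "Ord = ordinary_curves d (real (2 * n + 1) - real N) A"
    define seqs where "seqs = {xs. good d A xs \<and> length xs = L}"
    have cnt: "(m - 2 * (n - 1)) ^ L \<le> card seqs"
      unfolding seqs_def m_def using good_count[OF H fA d1, of L] LL0 unfolding D_def by simp
    have ex: "\<exists>C\<in>Ord. set xs \<subseteq> C" if "xs \<in> seqs" for xs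
      using good_curve[OF H fA assms(1) nA, of xs] that LL0
      unfolding seqs_def Ord_def N_def D_def by auto
    have fOrd: "finite Ord" unfolding Ord_def by (rule ord_finite[OF fA])
    have cardC: "card (C \<inter> A) \<le> K" if "C \<in> Ord" for C
    proof -
      have "real (card (C \<inter> A)) \<le> real (2 * n + 1) - real N"
        using that unfolding Ord_def ordinary_curves_def by auto
      then show ?thesis unfolding K_def by linarith
    qed
    have sub: "seqs \<subseteq> (\<Union>C\<in>Ord. {xs. set xs \<subseteq> C \<inter> A \<and> length xs = L})"
    proof
      fix xs assume xs: "xs \<in> seqs"
      then obtain C where "C \<in> Ord" "set xs \<subseteq> C" using ex by blast
      moreover have "set xs \<subseteq> A" "length xs = L" using xs unfolding seqs_def good_def by auto
      ultimately show "xs \<in> (\<Union>C\<in>Ord. {xs. set xs \<subseteq> C \<inter> A \<and> length xs = L})" by blast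
    qed
    have fin_l: "finite {xs. set xs \<subseteq> C \<inter> A \<and> length xs = L}" for C
      using finite_lists_length_eq[of "C \<inter> A" L] fA by simp
    have "card seqs \<le> card (\<Union>C\<in>Ord. {xs. set xs \<subseteq> C \<inter> A \<and> length xs = L})"
      by (rule card_mono[OF _ sub]) (use fOrd fin_l in auto)
    also have "\<dots> \<le> (\<Sum>C\<in>Ord. card {xs. set xs \<subseteq> C \<inter> A \<and> length xs = L})"
      by (rule card_UN_le[OF fOrd])
    also have "\<dots> = (\<Sum>C\<in>Ord. card (C \<inter> A) ^ L)"
      by (rule sum.cong[OF refl]) (use fA card_lists_length_eq[of "_ \<inter> A"] in simp)
    also have "\<dots> \<le> (\<Sum>C\<in>Ord. K ^ L)"
      by (rule sum_mono) (use cardC in \<open>simp add: power_mono\<close>)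
    also have "\<dots> = card Ord * K ^ L" by simp
    finally have main: "(m - 2 * (n - 1)) ^ L \<le> card Ord * K ^ L" using cnt by linarith
    have m4: "real m > 4 * real n" using mA unfolding m_def by simp
    have half: "real m / 2 \<le> real (m - 2 * (n - 1))" using m4 by (simp add: of_nat_diff)
    have "(real m / 2) ^ L \<le> real (m - 2 * (n - 1)) ^ L"
      by (rule power_mono[OF half]) (use m4 in simp)
    also have "\<dots> \<le> real (card Ord) * real K ^ L"
      using main by (metis of_nat_le_iff of_nat_mult of_nat_power)
    finally have "(real m / 2) ^ L \<le> real (card Ord) * real K ^ L" .
    then have q: "(real m / (2 * real K)) ^ L \<le> real (card Ord)"
      using K1 by (simp add: power_divide power_mult_distrib field_simps)
    have base: "1 \<le> real m / (2 * real K)" using K1 m4 by (simp add: field_simps)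
    have pi: "(real m / (2 * real K)) ^ L0 \<le> (real m / (2 * real K)) ^ L"
      by (rule power_increasing[OF LL0(1) base])
    have e: "(real m / (2 * real K)) ^ L0 = c5 * real m ^ L0"
      unfolding c5_def by (simp add: power_divide)
    have fin: "c5 * real m ^ L0 \<le> real (card Ord)" using q pi e by linarith
    show "c5 * real (card A) ^ (((d + 2) choose 2) - 3)
       \<le> real (card (ordinary_curves d (real (2 * n + 1) - real ((d + 2) choose 2)) A))"
      using fin unfolding m_def L0_def Ord_def N_def .
  qed
qed


end
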